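(* Let $\theta\in\pi(\mathbb{Q}\setminus\mathbb{Z})$, $\mu\in\mathbb{C}\setminus\{0,1\}$ and $a,b\in\mathbb{C}^n$ with $a\neq b$, and let $G$ be the group generated by $f=(a,e^{i\theta})$ and $g=(b,\mu)$. Then $G(a)$ is closed and discrete in $\mathbb{C}^n$ if and only if $G\subset\mathcal{S}_2\mathcal{R}_n$ or $G\subset\mathcal{S}_3\mathcal{R}_n$.
   Context: For $c\in\mathbb{C}^n$ and $\nu\in\mathbb{C}\setminus\{0,1\}$, $(c,\nu)$ denotes the map $z\mapsto\nu(z-c)+c$ of $\mathbb{C}^n$. $H_2=(\frac{\pi}{2}+\pi\mathbb{Z})\cup\pi\mathbb{Z}$, $F_2=\{e^{ix}:x\in H_2\}$, $H_3=(\frac{\pi}{3}+\pi\mathbb{Z})\cup(-\frac{\pi}{3}+\pi\mathbb{Z})\cup\pi\mathbb{Z}$, $F_3=\{e^{ix}:x\in H_3\}$; for $i\in\{2,3\}$, $\mathcal{S}_i\mathcal{R}_n=\{z\mapsto\lambda z+v:\lambda\in F_i,\ v\in\mathbb{C}^n\}$. $G(a)=\{h(a):h\in G\}$. *)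

theory Defs
  imports "HOL-Analysis.Analysis"
begin

text \<open>The map (c,nu): z maps to nu (z - c) + c on C^n, with C^n rendered as complex ^ 'n.\<close>
definition dil :: "complex ^ 'n \<Rightarrow> complex \<Rightarrow> (complex ^ 'n \<Rightarrow> complex ^ 'n)" where
  "dil c \<nu> = (\<lambda>z. \<nu> *s (z - c) + c)"

inductive_set gen_group :: "('a \<Rightarrow> 'a) set \<Rightarrow> ('a \<Rightarrow> 'a) set" for S where
  gen_id: "id \<in> gen_group S"
| gen_base: "h \<in> S \<Longrightarrow> h \<in> gen_group S"
| gen_inv: "h \<in> S \<Longrightarrow> inv h \<in> gen_group S"
| gen_comp: "h1 \<in> gen_group S \<Longrightarrow> h2 \<in> gen_group S \<Longrightarrow> h1 \<circ> h2 \<in> gen_group S"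

definition H2 :: "real set" where
  "H2 = {pi / 2 + pi * of_int k | k. True} \<union> {pi * of_int k | k. True}"

definition F2 :: "complex set" where
  "F2 = (\<lambda>x. exp (\<i> * complex_of_real x)) ` H2"

definition H3 :: "real set" where
  "H3 = {pi / 3 + pi * of_int k | k. True} \<union> {- pi / 3 + pi * of_int k | k. True}
        \<union> {pi * of_int k | k. True}"

definition F3 :: "complex set" where
  "F3 = (\<lambda>x. exp (\<i> * complex_of_real x)) ` H3"

definition SR :: "complex set \<Rightarrow> (complex ^ 'n \<Rightarrow> complex ^ 'n) set" where
  "SR F = {(\<lambda>z. l *s z + v) | l v. l \<in> F}"

end

theory Submission
  imports Defs
begin


lemma norm_smult_vec: "norm (c *s (x::complex^'n)) = norm c * norm x"
  unfolding norm_vec_def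
  by (simp add: L2_set_right_distrib norm_mult)

definition Af :: "complex^'n \<Rightarrow> complex^'n \<Rightarrow> complex \<Rightarrow> complex \<Rightarrow> (complex^'n \<Rightarrow> complex^'n)" where
  "Af a d l s = (\<lambda>z. l *s (z - a) + a + s *s d)"

lemma Af_comp: "Af a d l1 s1 \<circ> Af a d l2 s2 = Af a d (l1 * l2) (l1 * s2 + s1)"
  by (simp add: Af_def vec_eq_iff fun_eq_iff algebra_simps)

lemma Af_id: "Af a d 1 0 = id"
  by (simp add: Af_def vec_eq_iff fun_eq_iff)

lemma Af_apply_a: "Af a d l s a = a + s *s d"
  by (simp add: Af_def)

lemma dil_a: "dil a w = Af a (b - a) w 0"
  by (simp add: Af_def dil_def vec_eq_iff fun_eq_iff)

lemma dil_b: "dil b m = Af a (b - a) m (1 - m)"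
  by (simp add: Af_def dil_def vec_eq_iff fun_eq_iff algebra_simps)

lemma Af_inv: "l \<noteq> 0 \<Longrightarrow> inv (Af a d l s) = Af a d (1/l) (-s/l)"
  by (rule inv_unique_comp) (simp_all add: Af_comp Af_id field_simps)

lemma smult_cancel: "d \<noteq> (0::complex^'n) \<Longrightarrow> c *s d = c' *s d \<Longrightarrow> c = c'"
proof -
  assume "d \<noteq> 0" "c *s d = c' *s d"
  then obtain i where "d $ i \<noteq> 0" by (auto simp: vec_eq_iff)
  moreover have "c * d $ i = c' * d $ i" using \<open>c *s d = c' *s d\<close> by (metis vector_smult_component)
  ultimately show "c = c'" by simp
qed

lemma Af_inj: "d \<noteq> 0 \<Longrightarrow> Af a d l s = Af a d l' s' \<Longrightarrow> l = l' \<and> s = s'"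
proof -
  assume d: "d \<noteq> 0" and e: "Af a d l s = Af a d l' s'"
  have "Af a d l s a = Af a d l' s' a" using e by simp
  hence s: "s = s'" using smult_cancel[OF d] by (simp add: Af_def)
  have "Af a d l s (a + d) = Af a d l' s' (a + d)" using e by simp
  hence "l = l'" using smult_cancel[OF d] s by (simp add: Af_def)
  with s show ?thesis by simp
qed

lemma Af_SR: "d \<noteq> 0 \<Longrightarrow> Af a d l s = (\<lambda>z. l' *s z + v) \<Longrightarrow> l = l'"
proof -
  assume d: "d \<noteq> 0" and e: "Af a d l s = (\<lambda>z. l' *s z + v)"
  have "Af a d l s (a + d) - Af a d l s a = l' *s (a + d) + v - (l' *s a + v)" using e by simp
  hence "l *s d = l' *s d" by (simp add: Af_def algebra_simps vec_eq_iff)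
  thus ?thesis using smult_cancel[OF d] by blast
qed

lemma Af_in_SR: "l \<in> F \<Longrightarrow> Af a d l s \<in> SR F"
  unfolding SR_def Af_def
  by (rule CollectI, rule exI[of _ l], rule exI[of _ "a - l *s a + s *s d"])
     (auto simp: fun_eq_iff vec_eq_iff algebra_simps)



definition zeta :: complex where "zeta = Complex (1/2) (sqrt 3 / 2)"
definition E2 :: "complex set" where "E2 = {1, -1, \<i>, -\<i>}"
definition E3 :: "complex set" where "E3 = {1, -1, zeta, -zeta, zeta - 1, 1 - zeta}"

definition good :: "complex \<Rightarrow> bool" where
  "good l \<longleftrightarrow> norm l = 1 \<and> (l = 1 \<or> l = -1 \<or> \<bar>Re l\<bar> \<le> 1/2)"

lemma sq3: "(sqrt 3 / 2)^2 = (3/4::real)"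
  by (simp add: power_divide)

lemma norm_one_ReIm: "norm l = 1 \<Longrightarrow> (Re l)^2 + (Im l)^2 = 1"
  by (metis cmod_power2 power_one)

lemma good_sq:
  assumes g1: "good l" and g2: "good (l^2)"
  shows "l \<in> E2 \<union> E3"
proof -
  define x where "x = Re l"
  define y where "y = Im l"
  have n: "x^2 + y^2 = 1" using g1 norm_one_ReIm unfolding good_def x_def y_def by blast
  have l: "l = Complex x y" by (simp add: x_def y_def)
  have Re2: "Re (l^2) = x^2 - y^2" and Im2: "Im (l^2) = 2*x*y"
    by (simp_all add: l power2_eq_square)
  consider "l = 1" | "l = -1" | "\<bar>x\<bar> \<le> 1/2" using g1 unfolding good_def x_def by blast
  then show ?thesis
  proof cases
    case 3
    consider "l^2 = 1" | "l^2 = -1" | "\<bar>x^2 - y^2\<bar> \<le> 1/2" using g2 Re2 unfolding good_def by metis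
    then show ?thesis
    proof cases
      case 1
      hence "x^2 - y^2 = 1" using Re2 by simp
      hence "x^2 = 1" using n by simp
      hence "x = 1 \<or> x = -1" by (simp add: power2_eq_1_iff)
      with 3 show ?thesis by auto
    next
      case 2
      hence "x^2 - y^2 = -1" "2*x*y = 0" using Re2 Im2 by simp_all
      hence "x = 0" using n by (smt (verit) mult_eq_0_iff power2_eq_square zero_less_power2)
      hence "y^2 = 1" using n by simp
      hence "y = 1 \<or> y = -1" by (simp add: power2_eq_1_iff)
      thus ?thesis using \<open>x = 0\<close> l by (auto simp: E2_def complex_eq_iff)
    next
      case 4: 3
      have "x^2 - y^2 = 2*x^2 - 1" using n by simp
      hence "x^2 \<ge> 1/4" using abs_le_D2[OF 4] by linarith
      moreover have "x^2 \<le> 1/4"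
      proof -
        have "x^2 = \<bar>x\<bar>^2" by simp
        also have "\<dots> \<le> (1/2)^2" using 3 by (intro power_mono) auto
        finally show ?thesis by (simp add: power2_eq_square)
      qed
      ultimately have x2: "x^2 = (1/2)^2" by (simp add: power2_eq_square)
      hence "y^2 = (sqrt 3 / 2)^2" using n sq3 by (simp add: power2_eq_square)
      hence y: "y = sqrt 3 / 2 \<or> y = - (sqrt 3 / 2)" by (simp add: power2_eq_iff)
      have x: "x = 1/2 \<or> x = -1/2" using x2 by (simp add: power2_eq_iff)
      show ?thesis using x y l by (auto simp: E3_def zeta_def complex_eq_iff)
    qed
  qed (auto simp: E2_def)
qed

lemma E3'_not_good:
  assumes "l1 \<in> {\<i>, -\<i>}" "l2 \<in> {zeta, -zeta, zeta - 1, 1 - zeta}"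
  shows "\<not> good (l1 * l2)"
proof -
  have s: "sqrt 3 / 2 > (1/2::real)"
  proof -
    have "(1::real) < sqrt 3" by (simp add: real_less_rsqrt)
    thus ?thesis by simp
  qed
  have "\<bar>Re (l1 * l2)\<bar> = sqrt 3 / 2" using assms by (auto simp: zeta_def)
  moreover have "l1 * l2 \<noteq> 1" "l1 * l2 \<noteq> -1" using assms by (auto simp: zeta_def complex_eq_iff)
  ultimately show ?thesis using s unfolding good_def by auto
qed

lemma cis_shift: "cis (x + pi * of_int k) = cis x \<or> cis (x + pi * of_int k) = - cis x"
proof (cases "even k")
  case True
  then obtain m where m: "k = 2 * m" by blast
  have "cis (x + pi * of_int k) = cis x * cis (2 * pi * of_int m)" by (simp add: cis_mult m algebra_simps)
  also have "\<dots> = cis x" by simp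
  finally show ?thesis by simp
next
  case False
  then obtain m where m: "k = 2 * m + 1" using oddE by blast
  have e: "x + pi * of_int k = (x + 2 * pi * of_int m) + pi" by (simp add: m algebra_simps)
  have c1: "cis (2 * pi * of_int m) = 1" by (rule cis_multiple_2pi) simp
  have "cis (x + 2 * pi * of_int m) = cis x * cis (2 * pi * of_int m)" by (simp only: cis_mult)
  also have "\<dots> = cis x" by (simp only: c1 mult_1_right)
  finally have "cis (x + 2 * pi * of_int m) = cis x" .
  hence "cis (x + pi * of_int k) = - cis x" unfolding e by (metis minus_cis)
  thus ?thesis by simp
qed

lemma cis_60: "cis (pi/3) = zeta"
  by (simp add: zeta_def complex_eq_iff cos_60 sin_60)

lemma cis_m60: "cis (- (pi/3)) = 1 - zeta"
  by (simp add: zeta_def complex_eq_iff cos_60 sin_60)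

lemma expcis: "exp (\<i> * complex_of_real x) = cis x"
  by (simp add: cis_conv_exp)

lemma F2_eq: "F2 = E2"
proof
  show "F2 \<subseteq> E2"
  proof
    fix z assume "z \<in> F2"
    then obtain x where z: "z = cis x" and x: "x \<in> H2" by (auto simp: F2_def expcis)
    from x obtain k where "x = pi/2 + pi * of_int k \<or> x = 0 + pi * of_int k" by (auto simp: H2_def)
    thus "z \<in> E2" using cis_shift[of "pi/2" k] cis_shift[of 0 k] z by (auto simp: E2_def)
  qed
next
  have "1 = cis (pi * of_int 0)" "-1 = cis (pi * of_int 1)" "\<i> = cis (pi/2 + pi * of_int 0)"
      "-\<i> = cis (pi/2 + pi * of_int 1)"
    using minus_cis[of "pi/2"] by simp_all
  moreover have "\<And>k. pi * of_int k \<in> H2" "\<And>k. pi/2 + pi * of_int k \<in> H2" by (auto simp: H2_def)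
  ultimately show "E2 \<subseteq> F2" unfolding E2_def F2_def expcis by (metis empty_subsetI image_eqI insert_subset)
qed

lemma F3_eq: "F3 = E3"
proof
  show "F3 \<subseteq> E3"
  proof
    fix z assume "z \<in> F3"
    then obtain x where z: "z = cis x" and x: "x \<in> H3" by (auto simp: F3_def expcis)
    from x obtain k where "x = pi/3 + pi * of_int k \<or> x = - (pi/3) + pi * of_int k \<or> x = 0 + pi * of_int k"
      by (auto simp: H3_def)
    thus "z \<in> E3" using cis_shift[of "pi/3" k] cis_shift[of "-(pi/3)" k] cis_shift[of 0 k] z cis_60 cis_m60
      by (auto simp: E3_def)
  qed
next
  have "1 = cis (pi * of_int 0)" "-1 = cis (pi * of_int 1)" "zeta = cis (pi/3 + pi * of_int 0)"
      "-zeta = cis (pi/3 + pi * of_int 1)" "1 - zeta = cis (-(pi/3) + pi * of_int 0)"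
      "zeta - 1 = cis (-(pi/3) + pi * of_int 1)"
    using minus_cis[of "pi/3"] minus_cis[of "-(pi/3)"] by (simp_all add: cis_60 cis_m60)
  moreover have "\<And>k. pi * of_int k \<in> H3" "\<And>k. pi/3 + pi * of_int k \<in> H3" "\<And>k. -(pi/3) + pi * of_int k \<in> H3"
    by (auto simp: H3_def)
  ultimately show "E3 \<subseteq> F3" unfolding E3_def F3_def expcis by (metis empty_subsetI image_eqI insert_subset)
qed



lemma G_inv:
  assumes l1: "l1 \<noteq> 0" and l2: "l2 \<noteq> 0"
  shows "h \<in> gen_group {Af a d l1 s1, Af a d l2 s2} \<Longrightarrow>
    \<exists>l s. l \<noteq> 0 \<and> h = Af a d l s \<and> Af a d (1/l) (-s/l) \<in> gen_group {Af a d l1 s1, Af a d l2 s2}"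
proof (induction rule: gen_group.induct)
  case gen_id
  have "Af a d (1/1) (-0/1) = id" by (simp add: Af_id)
  thus ?case using Af_id gen_group.gen_id by (metis one_neq_zero)
next
  case (gen_base h)
  then obtain l s where ls: "l \<noteq> 0" "h = Af a d l s" using l1 l2 by blast
  have "inv h \<in> gen_group {Af a d l1 s1, Af a d l2 s2}" using gen_base by (rule gen_group.gen_inv)
  thus ?case using ls Af_inv by metis
next
  case (gen_inv h)
  then obtain l s where ls: "l \<noteq> 0" "h = Af a d l s" using l1 l2 by blast
  have "h \<in> gen_group {Af a d l1 s1, Af a d l2 s2}" using gen_inv by (rule gen_group.gen_base)
  thus ?case using ls Af_inv[OF ls(1)] by (intro exI[of _ "1/l"] exI[of _ "-s/l"]) simp
next
  case (gen_comp h1 h2)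
  from gen_comp.IH obtain l1' s1' l2' s2' where
    A: "l1' \<noteq> 0" "h1 = Af a d l1' s1'" "Af a d (1/l1') (-s1'/l1') \<in> gen_group {Af a d l1 s1, Af a d l2 s2}"
       "l2' \<noteq> 0" "h2 = Af a d l2' s2'" "Af a d (1/l2') (-s2'/l2') \<in> gen_group {Af a d l1 s1, Af a d l2 s2}"
    by blast
  have "Af a d (1/l2') (-s2'/l2') \<circ> Af a d (1/l1') (-s1'/l1') \<in> gen_group {Af a d l1 s1, Af a d l2 s2}"
    using A by (intro gen_group.gen_comp)
  moreover have "Af a d (1/l2') (-s2'/l2') \<circ> Af a d (1/l1') (-s1'/l1') =
     Af a d (1/(l1' * l2')) (-(l1' * s2' + s1')/(l1' * l2'))"
    unfolding Af_comp by (rule arg_cong2[where f="Af a d"]) (use A in \<open>simp_all add: field_simps\<close>)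
  ultimately show ?case using A by (intro exI[of _ "l1' * l2'"] exI[of _ "l1' * s2' + s1'"]) (simp add: Af_comp)
qed

lemma G_rep:
  assumes P1: "P l1 s1" and P2: "P l2 s2" and Pi1: "P (1/l1) (-s1/l1)" and Pi2: "P (1/l2) (-s2/l2)"
    and P0: "P 1 0" and Pc: "\<And>l s l' s'. P l s \<Longrightarrow> P l' s' \<Longrightarrow> P (l * l') (l * s' + s)"
    and l1: "l1 \<noteq> 0" and l2: "l2 \<noteq> 0"
  shows "h \<in> gen_group {Af a d l1 s1, Af a d l2 s2} \<Longrightarrow> \<exists>l s. h = Af a d l s \<and> P l s"
proof (induction rule: gen_group.induct)
  case gen_id
  show ?case using P0 Af_id by metis
next
  case (gen_base h)
  thus ?case using P1 P2 by blast
next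
  case (gen_inv h)
  thus ?case using Pi1 Pi2 by (elim insertE; simp add: Af_inv l1 l2; blast)
next
  case (gen_comp h1 h2)
  thus ?case using Pc Af_comp by metis
qed

lemma closed_discrete_finite:
  fixes S :: "'a::heine_borel set"
  assumes "closed S" "discrete S" "bounded K"
  shows "finite (S \<inter> K)"
proof (rule ccontr)
  assume inf: "infinite (S \<inter> K)"
  have "compact (closure K)" using assms(3) by (simp add: compact_closure)
  then obtain x where "x islimpt (S \<inter> K)"
    using Heine_Borel_imp_Bolzano_Weierstrass[OF _ inf] closure_subset by blast
  hence "x islimpt S" by (meson inf_le1 islimpt_subset)
  hence "x \<in> S" using assms(1) closed_limpt by blast
  hence "x isolated_in S" using assms(2) discreteD by blast
  thus False using \<open>x islimpt S\<close> isolated_in_islimpt_iff by blast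
qed



lemma good_intro:
  assumes n: "norm l = 1" and m: "l \<noteq> 1 \<Longrightarrow> 1 \<le> norm (l - 1)" and p: "l \<noteq> -1 \<Longrightarrow> 1 \<le> norm (l + 1)"
  shows "good l"
proof (cases "l = 1 \<or> l = -1")
  case True thus ?thesis using n by (auto simp: good_def)
next
  case False
  have s: "(Re l)^2 + (Im l)^2 = 1" using n norm_one_ReIm by blast
  have "1 \<le> (norm (l - 1))^2" using m False by (simp add: one_le_power)
  also have "(norm (l - 1))^2 = (Re l - 1)^2 + (Im l)^2" by (simp add: cmod_power2)
  finally have a: "Re l \<le> 1/2" using s by (simp add: power2_eq_square algebra_simps)
  have "1 \<le> (norm (l + 1))^2" using p False by (simp add: one_le_power)
  also have "(norm (l + 1))^2 = (Re l + 1)^2 + (Im l)^2" by (simp add: cmod_power2)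
  finally have b: "Re l \<ge> -1/2" using s by (simp add: power2_eq_square algebra_simps)
  show ?thesis using a b n by (auto simp: good_def)
qed

lemma forward:
  fixes a d :: "complex^'n"
  assumes d: "d \<noteq> 0" and l1: "l1 \<noteq> 0" and l2: "l2 \<noteq> 0"
    and G: "G = gen_group {Af a d l1 s1, Af a d l2 s2}"
    and tau: "Af a d 1 \<tau> \<in> G" "\<tau> \<noteq> 0"
    and cl: "closed ((\<lambda>h. h a) ` G)" and di: "discrete ((\<lambda>h. h a) ` G)"
  shows "(\<forall>l s. Af a d l s \<in> G \<longrightarrow> l \<in> E2) \<or> (\<forall>l s. Af a d l s \<in> G \<longrightarrow> l \<in> E3)"
proof -
  have inv: "l \<noteq> 0 \<and> Af a d (1/l) (-s/l) \<in> G" if A0: "Af a d l s \<in> G" for l s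
  proof -
    obtain l' s' where A: "l' \<noteq> 0" "Af a d l s = Af a d l' s'" "Af a d (1/l') (-s'/l') \<in> G"
      using G_inv[OF l1 l2, of "Af a d l s" a d s1 s2] G A0 by blast
    have "l = l' \<and> s = s'" using Af_inj[OF d A(2)] .
    thus ?thesis using A by simp
  qed
  have comp: "Af a d (l * l') (l * s' + s) \<in> G" if "Af a d l s \<in> G" "Af a d l' s' \<in> G" for l s l' s'
    using gen_group.gen_comp[OF that[unfolded G]] by (simp add: Af_comp G)
  define T where "T = {t. Af a d 1 t \<in> G}"
  define Lam where "Lam = {l. \<exists>s. Af a d l s \<in> G}"
  have Tadd: "t1 + t2 \<in> T" if "t1 \<in> T" "t2 \<in> T" for t1 t2
    using comp[of 1 t1 1 t2] that by (simp add: T_def add.commute)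
  have Tneg: "- t \<in> T" if "t \<in> T" for t
    using inv[of 1 t] that by (simp add: T_def)
  have Tmul: "l * t \<in> T" if L: "l \<in> Lam" and Tt: "t \<in> T" for l t
  proof -
    obtain s where s: "Af a d l s \<in> G" using L Lam_def by blast
    have l0: "l \<noteq> 0" and i: "Af a d (1/l) (-s/l) \<in> G" using inv[OF s] by auto
    have "Af a d (l * 1) (l * t + s) \<in> G" using comp[OF s, of 1 t] Tt T_def by blast
    from comp[OF this i] have "Af a d (l * 1 * (1/l)) (l * 1 * (-s/l) + (l * t + s)) \<in> G" .
    thus ?thesis using l0 by (simp add: T_def)
  qed
  have Linv: "1/l \<in> Lam" if "l \<in> Lam" for l using inv that Lam_def by blast
  have Lmul: "l * l' \<in> Lam" if "l \<in> Lam" "l' \<in> Lam" for l l' using comp that Lam_def by blast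
  have L0: "l \<noteq> 0" if "l \<in> Lam" for l using inv that Lam_def by blast
  have fin: "finite {t \<in> T. norm t \<le> r}" for r
  proof -
    have sub: "(\<lambda>t. a + t *s d) ` {t \<in> T. norm t \<le> r} \<subseteq> (\<lambda>h. h a) ` G \<inter> cball a (r * norm d)"
    proof
      fix x assume "x \<in> (\<lambda>t. a + t *s d) ` {t \<in> T. norm t \<le> r}"
      then obtain t where t: "t \<in> T" "norm t \<le> r" "x = a + t *s d" by blast
      have "x = Af a d 1 t a" using t by (simp add: Af_apply_a)
      hence "x \<in> (\<lambda>h. h a) ` G" using t T_def by blast
      moreover have "dist a x \<le> r * norm d"
        using t by (simp add: dist_norm norm_smult_vec mult_right_mono)
      ultimately show "x \<in> (\<lambda>h. h a) ` G \<inter> cball a (r * norm d)" by simp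
    qed
    have "finite ((\<lambda>h. h a) ` G \<inter> cball a (r * norm d))"
      using closed_discrete_finite[OF cl di] by simp
    hence "finite ((\<lambda>t. a + t *s d) ` {t \<in> T. norm t \<le> r})" using sub finite_subset by blast
    moreover have "inj_on (\<lambda>t. a + t *s d) {t \<in> T. norm t \<le> r}"
      using smult_cancel[OF d] by (auto simp: inj_on_def)
    ultimately show ?thesis using finite_imageD by blast
  qed
  define X0 where "X0 = {t \<in> T. norm t \<le> norm \<tau>} - {0}"
  have X0f: "finite X0" using fin X0_def by simp
  have tX0: "\<tau> \<in> X0" using tau T_def X0_def by simp
  define m where "m = Min (norm ` X0)"
  have "m \<in> norm ` X0" unfolding m_def using X0f tX0 by (intro Min_in) auto
  then obtain v where v: "v \<in> X0" "norm v = m" by blast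
  have vT: "v \<in> T" and v0: "v \<noteq> 0" using v X0_def by auto
  have vmin: "norm v \<le> norm t" if "t \<in> T" "t \<noteq> 0" for t
  proof (cases "norm t \<le> norm \<tau>")
    case True
    hence "t \<in> X0" using that X0_def by simp
    thus ?thesis using v X0f m_def by simp
  next
    case False
    have "norm v \<le> norm \<tau>" using v X0_def by simp
    thus ?thesis using False by simp
  qed
  have nv: "norm v > 0" using v0 by simp
  have notsmall: "\<not> norm l < 1" if "l \<in> Lam" for l
  proof
    assume "norm l < 1"
    have "l * v \<in> T" using Tmul that vT by blast
    moreover have "l * v \<noteq> 0" using L0[OF that] v0 by simp
    ultimately have "norm v \<le> norm (l * v)" using vmin by blast
    hence "norm v \<le> norm l * norm v" by (simp only: norm_mult)
    thus False using \<open>norm l < 1\<close> nv by (simp add: mult_le_cancel_right1)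
  qed
  have norm1: "norm l = 1" if "l \<in> Lam" for l
  proof -
    have a: "\<not> norm l < 1" using notsmall that by blast
    have "\<not> norm (1/l) < 1" using notsmall Linv that by blast
    hence "norm l \<le> 1" using L0[OF that] by (simp add: norm_divide divide_less_eq)
    thus ?thesis using a by simp
  qed
  have goodL: "good l" if "l \<in> Lam" for l
  proof (rule good_intro)
    show "norm l = 1" using norm1 that by blast
  next
    assume "l \<noteq> 1"
    have "l * v + - v \<in> T" using Tadd Tneg Tmul that vT by blast
    moreover have "l * v + - v = (l - 1) * v" by (simp add: algebra_simps)
    moreover have "(l - 1) * v \<noteq> 0" using v0 \<open>l \<noteq> 1\<close> by simp
    ultimately have "norm v \<le> norm ((l - 1) * v)" using vmin by metis
    hence "norm v \<le> norm (l - 1) * norm v" by (simp add: norm_mult)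
    thus "1 \<le> norm (l - 1)" using nv by (simp add: mult_le_cancel_right1)
  next
    assume "l \<noteq> -1"
    have "l * v + v \<in> T" using Tadd Tmul that vT by blast
    moreover have "l * v + v = (l + 1) * v" by (simp add: algebra_simps)
    moreover have "(l + 1) * v \<noteq> 0" using v0 \<open>l \<noteq> -1\<close> by (simp add: add_eq_0_iff2)
    ultimately have "norm v \<le> norm ((l + 1) * v)" using vmin by metis
    hence "norm v \<le> norm (l + 1) * norm v" by (simp add: norm_mult)
    thus "1 \<le> norm (l + 1)" using nv by (simp add: mult_le_cancel_right1)
  qed
  have inE: "l \<in> E2 \<union> E3" if "l \<in> Lam" for l
    using good_sq[OF goodL[OF that]] goodL[OF Lmul[OF that that]] by (simp add: power2_eq_square)
  show ?thesis
  proof (rule ccontr)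
    assume "\<not> ?thesis"
    then obtain l s l' s' where A: "Af a d l s \<in> G" "l \<notin> E2" "Af a d l' s' \<in> G" "l' \<notin> E3" by blast
    have lL: "l \<in> Lam" and lL': "l' \<in> Lam" using A Lam_def by auto
    have "l \<in> {zeta, -zeta, zeta - 1, 1 - zeta}" using inE[OF lL] A(2) unfolding E2_def E3_def by blast
    moreover have "l' \<in> {\<i>, -\<i>}" using inE[OF lL'] A(4) unfolding E2_def E3_def by blast
    ultimately have "\<not> good (l' * l)" using E3'_not_good by blast
    thus False using goodL Lmul[OF lL' lL] by blast
  qed
qed



definition Rset :: "complex \<Rightarrow> complex set" where
  "Rset z = {w. \<exists>m n::int. w = of_int m + of_int n * z}"

lemma R_intro: "w = of_int m + of_int n * z \<Longrightarrow> w \<in> Rset z"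
  unfolding Rset_def by blast

lemma R_add: "x \<in> Rset z \<Longrightarrow> y \<in> Rset z \<Longrightarrow> x + y \<in> Rset z"
proof -
  assume "x \<in> Rset z" "y \<in> Rset z"
  then obtain m n m' n' where "x = of_int m + of_int n * z" "y = of_int m' + of_int n' * z"
    unfolding Rset_def by blast
  thus ?thesis by (intro R_intro[of _ "m + m'" "n + n'"]) (simp add: algebra_simps)
qed

lemma R_neg: "x \<in> Rset z \<Longrightarrow> - x \<in> Rset z"
proof -
  assume "x \<in> Rset z"
  then obtain m n where "x = of_int m + of_int n * z" unfolding Rset_def by blast
  thus ?thesis by (intro R_intro[of _ "- m" "- n"]) (simp add: algebra_simps)
qed

lemma R_mult:
  assumes zz: "z * z = of_int p + of_int q * z"
  shows "x \<in> Rset z \<Longrightarrow> y \<in> Rset z \<Longrightarrow> x * y \<in> Rset z"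
proof -
  assume "x \<in> Rset z" "y \<in> Rset z"
  then obtain m n m' n' where xy: "x = of_int m + of_int n * z" "y = of_int m' + of_int n' * z"
    unfolding Rset_def by blast
  have "x * y = of_int (m*m') + of_int (m*n' + n*m') * z + of_int (n*n') * (z * z)"
    unfolding xy by (simp add: algebra_simps)
  also have "\<dots> = of_int (m*m' + n*n'*p) + of_int (m*n' + n*m' + n*n'*q) * z"
    unfolding zz by (simp add: algebra_simps)
  finally show ?thesis by (rule R_intro)
qed

lemma R_int: "of_int k \<in> Rset z" by (rule R_intro[of _ k 0]) simp
lemma R_1: "1 \<in> Rset z" using R_int[of 1] by simp
lemma R_0: "0 \<in> Rset z" using R_int[of 0] by simp
lemma R_z: "z \<in> Rset z" by (rule R_intro[of _ 0 1]) simp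

lemma zeta_sq: "zeta * zeta = zeta - 1"
  by (simp add: zeta_def complex_eq_iff)

lemma i_sq: "\<i> * \<i> = of_int (-1) + of_int 0 * \<i>" by simp
lemma zeta_sq': "zeta * zeta = of_int (-1) + of_int 1 * zeta" using zeta_sq by simp

lemma inv_eq: "x * y = 1 \<Longrightarrow> 1 / x = (y::complex)"
  using inverse_unique by (metis inverse_eq_divide)

lemma E2_R: "l \<in> E2 \<Longrightarrow> l \<in> Rset \<i> \<and> 1 / l \<in> Rset \<i>"
  using R_1 R_z R_neg[OF R_1] R_neg[OF R_z[of \<i>]] by (auto simp: E2_def)

lemma E3_R: "l \<in> E3 \<Longrightarrow> l \<in> Rset zeta \<and> 1 / l \<in> Rset zeta"
proof -
  have a: "1 - zeta \<in> Rset zeta" "zeta - 1 \<in> Rset zeta" "zeta \<in> Rset zeta" "- zeta \<in> Rset zeta"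
    "1 \<in> Rset zeta" "-1 \<in> Rset zeta"
    apply (rule R_intro[of _ 1 "-1"], simp)
    apply (rule R_intro[of _ "-1" 1], simp)
    apply (rule R_z)
    apply (rule R_neg[OF R_z])
    apply (rule R_1)
    apply (rule R_neg[OF R_1])
    done
  have b: "1 / zeta = 1 - zeta" "1 / (1 - zeta) = zeta" "1 / (- zeta) = zeta - 1" "1 / (zeta - 1) = - zeta"
    by (rule inv_eq, simp add: right_diff_distrib left_diff_distrib zeta_sq)+
  assume "l \<in> E3"
  thus ?thesis using a b by (auto simp: E3_def)
qed


lemma R_lb_i: "w \<in> Rset \<i> \<Longrightarrow> w \<noteq> 0 \<Longrightarrow> 1 \<le> norm w"
proof -
  assume w: "w \<in> Rset \<i>" "w \<noteq> 0"
  then obtain m n where wmn: "w = of_int m + of_int n * \<i>" unfolding Rset_def by blast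
  have e: "(norm w)^2 = of_int (m^2 + n^2)" unfolding wmn by (simp add: cmod_power2)
  moreover have "(norm w)^2 > 0" using w by simp
  ultimately have "(of_int (m^2 + n^2)::real) > 0" by metis
  hence "m^2 + n^2 \<ge> 1" by (simp only: of_int_0_less_iff)
  hence "1 \<le> (norm w)^2" unfolding e by (metis of_int_1 of_int_le_iff)
  thus ?thesis by (metis norm_ge_zero power2_le_imp_le one_power2)
qed

lemma R_lb_zeta: "w \<in> Rset zeta \<Longrightarrow> w \<noteq> 0 \<Longrightarrow> 1 \<le> norm w"
proof -
  assume w: "w \<in> Rset zeta" "w \<noteq> 0"
  then obtain m n where wmn: "w = of_int m + of_int n * zeta" unfolding Rset_def by blast
  have R: "Re w = m + n / 2" and I: "Im w = n * sqrt 3 / 2" unfolding wmn by (simp_all add: zeta_def)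
  have "(norm w)^2 = (Re w)^2 + (Im w)^2" by (simp add: cmod_power2)
  also have "\<dots> = (m + n/2)^2 + (n * sqrt 3 / 2)^2" unfolding R I ..
  also have "\<dots> = of_int (m^2 + m*n + n^2)" by (simp add: power2_eq_square algebra_simps)
  finally have e: "(norm w)^2 = of_int (m^2 + m*n + n^2)" .
  moreover have "(norm w)^2 > 0" using w by simp
  ultimately have "(of_int (m^2 + m*n + n^2)::real) > 0" by metis
  hence "m^2 + m*n + n^2 \<ge> 1" by (simp only: of_int_0_less_iff)
  hence "1 \<le> (norm w)^2" unfolding e by (metis of_int_1 of_int_le_iff)
  thus ?thesis by (metis norm_ge_zero power2_le_imp_le one_power2)
qed


lemma backward:
  fixes a d :: "complex^'n"
  assumes d: "d \<noteq> 0" and l1: "l1 \<noteq> 0" and l2: "l2 \<noteq> 0"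
    and G: "G = gen_group {Af a d l1 s1, Af a d l2 s2}"
    and zz: "z * z = of_int p + of_int q * z"
    and lb: "\<And>w. w \<in> Rset z \<Longrightarrow> w \<noteq> 0 \<Longrightarrow> 1 \<le> norm w"
    and mem: "l1 \<in> Rset z" "l2 \<in> Rset z" "s1 \<in> Rset z" "s2 \<in> Rset z" "1/l1 \<in> Rset z" "1/l2 \<in> Rset z"
      "-s1/l1 \<in> Rset z" "-s2/l2 \<in> Rset z"
  shows "closed ((\<lambda>h. h a) ` G) \<and> discrete ((\<lambda>h. h a) ` G)"
proof -
  have Pc: "\<And>l s l' s'. l \<in> Rset z \<and> s \<in> Rset z \<Longrightarrow> l' \<in> Rset z \<and> s' \<in> Rset z \<Longrightarrow>
      l * l' \<in> Rset z \<and> l * s' + s \<in> Rset z"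
    using R_add R_mult[OF zz] by blast
  have rep: "\<exists>l s. h = Af a d l s \<and> (l \<in> Rset z \<and> s \<in> Rset z)" if hG: "h \<in> G" for h
  proof -
    have p: "l1 \<in> Rset z \<and> s1 \<in> Rset z" "l2 \<in> Rset z \<and> s2 \<in> Rset z"
      "1/l1 \<in> Rset z \<and> -s1/l1 \<in> Rset z" "1/l2 \<in> Rset z \<and> -s2/l2 \<in> Rset z"
      "1 \<in> Rset z \<and> 0 \<in> Rset z" using mem R_1 R_0 by auto
    have "h \<in> gen_group {Af a d l1 s1, Af a d l2 s2}" using hG G by simp
    from G_rep[where P="\<lambda>l s. l \<in> Rset z \<and> s \<in> Rset z", OF p Pc l1 l2 this] show ?thesis by simp
  qed
  have pts: "\<exists>s\<in>Rset z. x = a + s *s d" if X: "x \<in> (\<lambda>h. h a) ` G" for x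
  proof -
    obtain h where h: "h \<in> G" "x = h a" using X by blast
    obtain l s where "h = Af a d l s" "s \<in> Rset z" using rep[OF h(1)] by blast
    thus ?thesis using h(2) Af_apply_a by blast
  qed
  have sep: "norm d \<le> dist y x" if H: "x \<in> (\<lambda>h. h a) ` G" "y \<in> (\<lambda>h. h a) ` G" "y \<noteq> x" for x y
  proof -
    obtain s s' where s: "s \<in> Rset z" "x = a + s *s d" "s' \<in> Rset z" "y = a + s' *s d"
      using pts H by meson
    have "y - x = (s' - s) *s d" using s by (simp add: vec_eq_iff algebra_simps)
    hence "dist y x = norm ((s' - s) *s d)" by (simp add: dist_norm)
    also have "\<dots> = norm (s' - s) * norm d" by (rule norm_smult_vec)
    finally have e: "dist y x = norm (s' - s) * norm d" .
    have "s' - s \<in> Rset z" using R_add[OF s(3) R_neg[OF s(1)]] by simp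
    moreover have "s' - s \<noteq> 0" using s H(3) by auto
    ultimately have "1 \<le> norm (s' - s)" using lb by blast
    thus ?thesis unfolding e by (simp add: mult_le_cancel_right1)
  qed
  have dpos: "norm d > 0" using d by simp
  show ?thesis
  proof
    show "closed ((\<lambda>h. h a) ` G)"
    proof (rule discrete_imp_closed[OF dpos], intro ballI impI)
      fix x y assume "x \<in> (\<lambda>h. h a) ` G" "y \<in> (\<lambda>h. h a) ` G" "dist y x < norm d"
      thus "y = x" using sep[of x y] by linarith
    qed
  next
    show "discrete ((\<lambda>h. h a) ` G)"
    proof (rule discreteI)
      fix x assume x: "x \<in> (\<lambda>h. h a) ` G"
      show "x isolated_in (\<lambda>h. h a) ` G"
        unfolding isolated_in_dist_Ex_iff
      proof (intro conjI exI[of _ "norm d"] ballI impI)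
        fix y assume "y \<in> (\<lambda>h. h a) ` G" "dist x y < norm d"
        thus "y = x" using sep[of x y] x by (metis dist_commute not_less)
      qed (use x dpos in auto)
    qed
  qed
qed



theorem proposition3p4:
  fixes \<theta> :: real and \<mu> :: complex and a b :: "complex ^ 'n"
  assumes "\<theta> \<in> (\<lambda>q. pi * q) ` (\<rat> - \<int>)"
    and "\<mu> \<noteq> 0" and "\<mu> \<noteq> 1"
    and "a \<noteq> b"
  shows "(let G = gen_group {dil a (exp (\<i> * complex_of_real \<theta>)), dil b \<mu>};
              Ga = (\<lambda>h. h a) ` G
          in closed Ga \<and> discrete Ga)
         \<longleftrightarrow> (gen_group {dil a (exp (\<i> * complex_of_real \<theta>)), dil b \<mu>} \<subseteq> SR F2
              \<or> gen_group {dil a (exp (\<i> * complex_of_real \<theta>)), dil b \<mu>} \<subseteq> SR F3)"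
proof -
  define w where "w = exp (\<i> * complex_of_real \<theta>)"
  define d where "d = b - a"
  have d0: "d \<noteq> 0" using assms(4) d_def by simp
  have w0: "w \<noteq> 0" by (simp add: w_def)
  have m0: "\<mu> \<noteq> 0" and m1: "\<mu> \<noteq> 1" using assms(2,3) .
  have w1: "w \<noteq> 1"
  proof
    assume "w = 1"
    obtain q where q: "q \<in> \<rat> - \<int>" "\<theta> = pi * q" using assms(1) by blast
    have "sin \<theta> = Im (cis \<theta>)" by simp
    also have "cis \<theta> = 1" using \<open>w = 1\<close> by (simp add: w_def expcis)
    finally have "sin (q * pi) = 0" using q(2) by (simp add: mult.commute)
    hence "q \<in> \<int>" by (simp add: sin_times_pi_eq_0)
    thus False using q(1) by simp
  qed
  define G where "G = gen_group {Af a d w 0, Af a d \<mu> (1 - \<mu>)}"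
  have S: "{dil a w, dil b \<mu>} = {Af a d w 0, Af a d \<mu> (1 - \<mu>)}"
    using dil_a[of a w b] dil_b[of b \<mu> a] d_def by simp
  have main: "(closed ((\<lambda>h. h a) ` G) \<and> discrete ((\<lambda>h. h a) ` G)) \<longleftrightarrow> (G \<subseteq> SR F2 \<or> G \<subseteq> SR F3)"
  proof
    assume cd: "closed ((\<lambda>h. h a) ` G) \<and> discrete ((\<lambda>h. h a) ` G)"
    have f: "Af a d w 0 \<in> G" and g: "Af a d \<mu> (1 - \<mu>) \<in> G" unfolding G_def by (auto intro: gen_group.gen_base)
    have fi: "Af a d (1/w) (-0/w) \<in> G" unfolding G_def using Af_inv[OF w0, of a d 0, symmetric]
      by (metis gen_group.gen_inv insertI1)
    have gi: "Af a d (1/\<mu>) (-(1-\<mu>)/\<mu>) \<in> G" unfolding G_def using Af_inv[OF m0, of a d "1 - \<mu>", symmetric]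
      by (metis gen_group.gen_inv insertI1 insertI2)
    have "((Af a d w 0 \<circ> Af a d \<mu> (1 - \<mu>)) \<circ> Af a d (1/w) (-0/w)) \<circ> Af a d (1/\<mu>) (-(1-\<mu>)/\<mu>) \<in> G"
      unfolding G_def by (intro gen_group.gen_comp) (use f g fi gi in \<open>simp_all add: G_def\<close>)
    moreover have "((Af a d w 0 \<circ> Af a d \<mu> (1 - \<mu>)) \<circ> Af a d (1/w) (-0/w)) \<circ> Af a d (1/\<mu>) (-(1-\<mu>)/\<mu>)
        = Af a d 1 ((1 - \<mu>) * (w - 1))"
      unfolding Af_comp by (rule arg_cong2[where f="Af a d"]) (use w0 m0 in \<open>simp_all add: field_simps\<close>)
    ultimately have tau: "Af a d 1 ((1 - \<mu>) * (w - 1)) \<in> G" by simp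
    have tau0: "(1 - \<mu>) * (w - 1) \<noteq> 0" using w1 m1 by simp
    have disj: "(\<forall>l s. Af a d l s \<in> G \<longrightarrow> l \<in> E2) \<or> (\<forall>l s. Af a d l s \<in> G \<longrightarrow> l \<in> E3)"
      using forward[OF d0 w0 m0 G_def tau tau0] cd by blast
    have sub: "G \<subseteq> SR F" if H: "\<forall>l s. Af a d l s \<in> G \<longrightarrow> l \<in> F" for F
    proof
      fix h assume h: "h \<in> G"
      then obtain l s where "h = Af a d l s" using G_inv[OF w0 m0, of h a d 0 "1 - \<mu>"] G_def by blast
      thus "h \<in> SR F" using H h Af_in_SR by blast
    qed
    show "G \<subseteq> SR F2 \<or> G \<subseteq> SR F3" using disj sub F2_eq F3_eq by metis
  next
    have getl: "l \<in> F" if X: "Af a d l s \<in> SR F" for l s F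
    proof -
      obtain l' v where "Af a d l s = (\<lambda>z. l' *s z + v)" "l' \<in> F" using X unfolding SR_def by blast
      thus ?thesis using Af_SR[OF d0] by blast
    qed
    have f: "Af a d w 0 \<in> G" and g: "Af a d \<mu> (1 - \<mu>) \<in> G" unfolding G_def by (auto intro: gen_group.gen_base)
    have mems: "w \<in> Rset z" "\<mu> \<in> Rset z" "0 \<in> Rset z" "1 - \<mu> \<in> Rset z" "1/w \<in> Rset z" "1/\<mu> \<in> Rset z"
      "-0/w \<in> Rset z" "-(1 - \<mu>)/\<mu> \<in> Rset z"
      if "w \<in> Rset z \<and> 1/w \<in> Rset z" "\<mu> \<in> Rset z \<and> 1/\<mu> \<in> Rset z" for z
    proof -
      show "w \<in> Rset z" "\<mu> \<in> Rset z" "0 \<in> Rset z" "1/w \<in> Rset z" "1/\<mu> \<in> Rset z" "-0/w \<in> Rset z"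
        using that R_0 by auto
      show "1 - \<mu> \<in> Rset z" using R_add[OF R_1 R_neg[of \<mu>]] that by simp
      have "-(1 - \<mu>)/\<mu> = 1 + - (1/\<mu>)" using m0 by (simp add: field_simps)
      thus "-(1 - \<mu>)/\<mu> \<in> Rset z" using R_add[OF R_1 R_neg[of "1/\<mu>"]] that by simp
    qed
    assume "G \<subseteq> SR F2 \<or> G \<subseteq> SR F3"
    thus "closed ((\<lambda>h. h a) ` G) \<and> discrete ((\<lambda>h. h a) ` G)"
    proof
      assume "G \<subseteq> SR F2"
      hence "w \<in> E2" "\<mu> \<in> E2" using f g getl F2_eq by blast+
      hence "w \<in> Rset \<i> \<and> 1/w \<in> Rset \<i>" "\<mu> \<in> Rset \<i> \<and> 1/\<mu> \<in> Rset \<i>" using E2_R by blast+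
      note m = mems[OF this]
      show ?thesis by (rule backward[OF d0 w0 m0 G_def i_sq R_lb_i m])
    next
      assume "G \<subseteq> SR F3"
      hence "w \<in> E3" "\<mu> \<in> E3" using f g getl F3_eq by blast+
      hence "w \<in> Rset zeta \<and> 1/w \<in> Rset zeta" "\<mu> \<in> Rset zeta \<and> 1/\<mu> \<in> Rset zeta" using E3_R by blast+
      note m = mems[OF this]
      show ?thesis by (rule backward[OF d0 w0 m0 G_def zeta_sq' R_lb_zeta m])
    qed
  qed
  show ?thesis unfolding Let_def w_def[symmetric] S G_def[symmetric] using main .
qed


end
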